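(* Let $D\ge 1$, $0<a<\tfrac12$, $N_0>0$, $P>0$, and $\sigma_{\mathrm{eff}}=\sqrt{N_0/P}$. For real $x$ let $x \bmod 1 \triangleq x-\lfloor x+\tfrac12\rfloor$, applied entrywise to vectors. For $t\in\mathbb{R}$ define the per-dimension distortion $$\delta(t)=\mathbb{E}_{n}\Big[\big([t+n]\bmod 1 - t\big)^2\Big],\qquad n\sim\mathcal{N}(0,\sigma_{\mathrm{eff}}^2),$$ and for $\mathbf{s}\in\mathbb{R}^D$ define $\delta(\mathbf{s})=\mathbb{E}_{\mathbf{n}}\big[\lVert[\mathbf{s}+\mathbf{n}]\bmod 1-\mathbf{s}\rVert^2\big]$ with $\mathbf{n}\sim\mathcal{N}(\mathbf{0},\sigma_{\mathrm{eff}}^2\mathbf{I}_D)$ (so $\delta(\mathbf{s})=\sum_{d=1}^D\delta(s_d)$). Then for every $\mathbf{s}=(s_1,\dots,s_D)\in[-a,a]^D$, $$D\,\delta(0)\le\delta(\mathbf{s})\le D\,\delta(a).$$ Moreover, for real numbers $s_d,s'_d\in[-a,a]$ with $|s'_d|<|s_d|$, one has $\delta(s'_d)<\delta(s_d)$.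
   Context: Interpretation: in the P$^2$-AirComp protocol, when the true sum equals $\mathbf{s}\in[-a,a]^D$, the server's estimate is $[\mathbf{s}+\mathbf{z}/\sqrt{P}]\bmod 1$ with channel noise $\mathbf{z}\sim\mathcal{N}(\mathbf{0},N_0\mathbf{I}_D)$, so $\delta(\mathbf{s})$ is its pointwise mean-square error; the bound holds for arbitrary distributions of the sum supported in $[-a,a]^D$. *)

theory Defs
  imports "HOL-Probability.Probability"
begin

definition mod1 :: "real \<Rightarrow> real" where
  "mod1 x = x - real_of_int \<lfloor>x + 1/2\<rfloor>"

definition gauss :: "real \<Rightarrow> real measure" where
  "gauss \<sigma> = density lborel (normal_density 0 \<sigma>)"

definition delta1 :: "real \<Rightarrow> real \<Rightarrow> real" where
  "delta1 \<sigma> t = (\<integral>n. (mod1 (t + n) - t)\<^sup>2 \<partial>gauss \<sigma>)"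

definition deltaD :: "real \<Rightarrow> nat \<Rightarrow> (nat \<Rightarrow> real) \<Rightarrow> real" where
  "deltaD \<sigma> D s = (\<integral>n. (\<Sum>d<D. (mod1 (s d + n d) - s d)\<^sup>2) \<partial>(PiM {..<D} (\<lambda>_. gauss \<sigma>)))"

end

theory Submission imports Defs begin

lemma gauss_prob: "\<sigma> > 0 \<Longrightarrow> prob_space (gauss \<sigma>)"
  unfolding gauss_def by (rule prob_space_normal_density)

lemma sets_gauss[simp, measurable_cong]: "sets (gauss \<sigma>) = sets borel"
  unfolding gauss_def by simp

lemma space_gauss[simp]: "space (gauss \<sigma>) = UNIV"
  unfolding gauss_def by simp

definition F :: "real \<Rightarrow> real \<Rightarrow> real" where
  "F t n = (n - real_of_int \<lfloor>n + t + 1/2\<rfloor>)\<^sup>2"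
definition C :: "real \<Rightarrow> real \<Rightarrow> real" where
  "C t n = (n - real_of_int \<lceil>n + t - 1/2\<rceil>)\<^sup>2"

lemma F_meas[measurable]: "F t \<in> borel_measurable borel"
  unfolding F_def by measurable
lemma C_meas[measurable]: "C t \<in> borel_measurable borel"
  unfolding C_def by measurable

lemma F_bound: "\<bar>t\<bar> < 1/2 \<Longrightarrow> norm (F t n) \<le> 1"
proof -
  assume "\<bar>t\<bar> < 1/2"
  have "\<lfloor>n + t + 1/2\<rfloor> \<le> n + t + 1/2" "n + t + 1/2 < \<lfloor>n + t + 1/2\<rfloor> + 1" by linarith+
  hence "\<bar>n - real_of_int \<lfloor>n + t + 1/2\<rfloor>\<bar> \<le> 1" using \<open>\<bar>t\<bar> < 1/2\<close> by linarith
  thus ?thesis unfolding F_def by (simp add: abs_square_le_1)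
qed

lemma C_bound: "\<bar>t\<bar> < 1/2 \<Longrightarrow> norm (C t n) \<le> 1"
proof -
  assume "\<bar>t\<bar> < 1/2"
  have "\<lceil>n + t - 1/2\<rceil> \<ge> n + t - 1/2" "n + t - 1/2 > \<lceil>n + t - 1/2\<rceil> - 1" by linarith+
  hence "\<bar>n - real_of_int \<lceil>n + t - 1/2\<rceil>\<bar> \<le> 1" using \<open>\<bar>t\<bar> < 1/2\<close> by linarith
  thus ?thesis unfolding C_def by (simp add: abs_square_le_1)
qed

lemma F_int: "\<sigma> > 0 \<Longrightarrow> \<bar>t\<bar> < 1/2 \<Longrightarrow> integrable (gauss \<sigma>) (F t)"
proof -
  assume "\<sigma> > 0" "\<bar>t\<bar> < 1/2"
  interpret prob_space "gauss \<sigma>" using gauss_prob[OF \<open>\<sigma> > 0\<close>] .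
  show ?thesis by (rule integrable_const_bound[where B=1]) (auto intro!: AE_I2 simp: F_bound[OF \<open>\<bar>t\<bar> < 1/2\<close>, simplified])
qed
lemma C_int: "\<sigma> > 0 \<Longrightarrow> \<bar>t\<bar> < 1/2 \<Longrightarrow> integrable (gauss \<sigma>) (C t)"
proof -
  assume "\<sigma> > 0" "\<bar>t\<bar> < 1/2"
  interpret prob_space "gauss \<sigma>" using gauss_prob[OF \<open>\<sigma> > 0\<close>] .
  show ?thesis by (rule integrable_const_bound[where B=1]) (auto intro!: AE_I2 simp: C_bound[OF \<open>\<bar>t\<bar> < 1/2\<close>, simplified])
qed

lemma delta1_F: "delta1 \<sigma> t = integral\<^sup>L (gauss \<sigma>) (F t)"
  unfolding delta1_def F_def mod1_def by (rule Bochner_Integration.integral_cong) (auto simp: algebra_simps)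

lemma delta1_C: "delta1 \<sigma> (-t) = integral\<^sup>L (gauss \<sigma>) (C t)"
proof -
  have nd: "normal_density 0 \<sigma> (-x) = normal_density 0 \<sigma> x" for x
    by (simp add: normal_density_def)
  have "delta1 \<sigma> (-t) = integral\<^sup>L (gauss \<sigma>) (F (-t))" by (rule delta1_F)
  also have "\<dots> = (\<integral>x. normal_density 0 \<sigma> x * F (-t) x \<partial>lborel)"
    unfolding gauss_def by (subst integral_density) (auto simp: normal_density_nonneg)
  also have "\<dots> = (\<integral>x. normal_density 0 \<sigma> (0 + (-1) * x) * F (-t) (0 + (-1) * x) \<partial>lborel)"
    by (subst lborel_integral_real_affine[where c="-1" and t=0]) auto
  also have "\<dots> = (\<integral>x. normal_density 0 \<sigma> x * C t x \<partial>lborel)"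
  proof (rule Bochner_Integration.integral_cong[OF refl])
    fix x
    have "F (-t) (-x) = C t x"
      unfolding F_def C_def
      using floor_minus[of "x + t - 1/2"] by (simp add: algebra_simps power2_commute)
    thus "normal_density 0 \<sigma> (0 + (-1) * x) * F (-t) (0 + (-1) * x) = normal_density 0 \<sigma> x * C t x"
      using nd by simp
  qed
  also have "\<dots> = integral\<^sup>L (gauss \<sigma>) (C t)"
    unfolding gauss_def by (subst integral_density) (auto simp: normal_density_nonneg)
  finally show ?thesis .
qed


lemma strict_int:
  fixes f g :: "real \<Rightarrow> real"
  assumes s: "\<sigma> > 0" and fi: "integrable (gauss \<sigma>) f" and gi: "integrable (gauss \<sigma>) g"
    and le: "\<And>x. f x \<le> g x" and lt: "\<And>x. x \<in> {\<alpha><..<\<beta>} \<Longrightarrow> f x < g x" and ab: "\<alpha> < \<beta>"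
  shows "integral\<^sup>L (gauss \<sigma>) f < integral\<^sup>L (gauss \<sigma>) g"
proof (rule ccontr)
  assume "\<not> ?thesis"
  moreover have "integral\<^sup>L (gauss \<sigma>) f \<le> integral\<^sup>L (gauss \<sigma>) g"
    by (rule integral_mono[OF fi gi]) (rule le)
  ultimately have "integral\<^sup>L (gauss \<sigma>) (\<lambda>x. g x - f x) = 0"
    using fi gi by simp
  hence "AE x in gauss \<sigma>. g x - f x = 0"
    using integral_nonneg_eq_0_iff_AE[of "gauss \<sigma>" "\<lambda>x. g x - f x"] fi gi le by auto
  hence "AE x in lborel. 0 < normal_density 0 \<sigma> x \<longrightarrow> g x - f x = 0"
    unfolding gauss_def by (subst (asm) AE_density) auto
  hence "AE x in lborel. x \<notin> {\<alpha><..<\<beta>}"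
    by eventually_elim (use lt normal_density_pos[OF s] in force)
  then obtain N where N: "{x \<in> space lborel. \<not> x \<notin> {\<alpha><..<\<beta>}} \<subseteq> N" "emeasure lborel N = 0" "N \<in> sets lborel"
    by (erule AE_E)
  have "emeasure lborel {\<alpha><..<\<beta>} \<le> emeasure lborel N"
    using N by (intro emeasure_mono) auto
  thus False using N ab by simp
qed

lemma sq_le:
  fixes n :: real and K1 K2 :: int
  assumes "real_of_int K1 < K2 + 1" "real_of_int K2 < K1 + 2" "real_of_int K2 = K1 + 1 \<Longrightarrow> n \<le> K2 - 1/2"
  shows "(n - K1)\<^sup>2 \<le> (n - K2)\<^sup>2"
proof -
  have "K1 \<le> K2" "K2 \<le> K1 + 1" using assms(1,2) by linarith+
  show ?thesis
  proof (cases "K2 = K1")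
    case False
    hence "K2 = K1 + 1" using \<open>K1 \<le> K2\<close> \<open>K2 \<le> K1 + 1\<close> by linarith
    hence "(n - K2)\<^sup>2 - (n - K1)\<^sup>2 = 2 * (K2 - 1/2 - n)" by (simp add: power2_eq_square algebra_simps)
    thus ?thesis using assms \<open>K2 = K1 + 1\<close> by simp
  qed simp
qed

lemma sq_lt:
  fixes n :: real and K1 K2 :: int
  assumes "K2 = K1 + 1" "n < K2 - 1/2"
  shows "(n - K1)\<^sup>2 < (n - K2)\<^sup>2"
proof -
  have "(n - K2)\<^sup>2 - (n - K1)\<^sup>2 = 2 * (K2 - 1/2 - n)" using assms(1) by (simp add: power2_eq_square algebra_simps)
  moreover have "0 < 2 * (real_of_int K2 - 1/2 - n)" using assms(2) by simp
  ultimately show ?thesis by simp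
qed

context fixes u v :: real assumes uv: "0 \<le> u" "u < v" "v < 1/2" begin

lemma FF_le: "F u n \<le> F v n"
proof -
  have "of_int \<lfloor>n + u + 1/2\<rfloor> \<le> n + u + 1/2" "n + u + 1/2 < of_int \<lfloor>n + u + 1/2\<rfloor> + 1" by linarith+
  moreover have "of_int \<lfloor>n + v + 1/2\<rfloor> \<le> n + v + 1/2" "n + v + 1/2 < of_int \<lfloor>n + v + 1/2\<rfloor> + 1" by linarith+
  ultimately show ?thesis unfolding F_def C_def by (intro sq_le) (use uv in linarith)+
qed
lemma FF_lt: "n \<in> {1/2 - v<..<1/2 - u} \<Longrightarrow> F u n < F v n"
proof -
  assume "n \<in> {1/2 - v<..<1/2 - u}"
  hence n: "1/2 - v < n" "n < 1/2 - u" by auto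
  have e1: "\<lfloor>n + u + 1/2\<rfloor> = 0"
    using n uv by (simp add: floor_eq_iff; linarith)
  have e2: "\<lfloor>n + v + 1/2\<rfloor> = 1"
    using n uv by (simp add: floor_eq_iff; linarith)
  show ?thesis unfolding F_def C_def e1 e2 by (intro sq_lt) (use n uv in auto)
qed
lemma FC_le: "F u n \<le> C v n"
proof -
  have "of_int \<lfloor>n + u + 1/2\<rfloor> \<le> n + u + 1/2" "n + u + 1/2 < of_int \<lfloor>n + u + 1/2\<rfloor> + 1" by linarith+
  moreover have "n + v - 1/2 \<le> of_int \<lceil>n + v - 1/2\<rceil>" "of_int \<lceil>n + v - 1/2\<rceil> < n + v - 1/2 + 1" by linarith+
  ultimately show ?thesis unfolding F_def C_def by (intro sq_le) (use uv in linarith)+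
qed
lemma FC_lt: "n \<in> {1/2 - v<..<1/2 - u} \<Longrightarrow> F u n < C v n"
proof -
  assume "n \<in> {1/2 - v<..<1/2 - u}"
  hence n: "1/2 - v < n" "n < 1/2 - u" by auto
  have e1: "\<lfloor>n + u + 1/2\<rfloor> = 0"
    using n uv by (simp add: floor_eq_iff; linarith)
  have e2: "\<lceil>n + v - 1/2\<rceil> = 1"
    using n uv by (simp add: ceiling_eq_iff; linarith)
  show ?thesis unfolding F_def C_def e1 e2 by (intro sq_lt) (use n uv in auto)
qed
lemma CF_le: "C u n \<le> F v n"
proof -
  have "n + u - 1/2 \<le> of_int \<lceil>n + u - 1/2\<rceil>" "of_int \<lceil>n + u - 1/2\<rceil> < n + u - 1/2 + 1" by linarith+
  moreover have "of_int \<lfloor>n + v + 1/2\<rfloor> \<le> n + v + 1/2" "n + v + 1/2 < of_int \<lfloor>n + v + 1/2\<rfloor> + 1" by linarith+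
  ultimately show ?thesis unfolding F_def C_def by (intro sq_le) (use uv in linarith)+
qed
lemma CF_lt: "n \<in> {1/2 - v<..<1/2 - u} \<Longrightarrow> C u n < F v n"
proof -
  assume "n \<in> {1/2 - v<..<1/2 - u}"
  hence n: "1/2 - v < n" "n < 1/2 - u" by auto
  have e1: "\<lceil>n + u - 1/2\<rceil> = 0"
    using n uv by (simp add: ceiling_eq_iff; linarith)
  have e2: "\<lfloor>n + v + 1/2\<rfloor> = 1"
    using n uv by (simp add: floor_eq_iff; linarith)
  show ?thesis unfolding F_def C_def e1 e2 by (intro sq_lt) (use n uv in auto)
qed
lemma CC_le: "C u n \<le> C v n"
proof -
  have "n + u - 1/2 \<le> of_int \<lceil>n + u - 1/2\<rceil>" "of_int \<lceil>n + u - 1/2\<rceil> < n + u - 1/2 + 1" by linarith+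
  moreover have "n + v - 1/2 \<le> of_int \<lceil>n + v - 1/2\<rceil>" "of_int \<lceil>n + v - 1/2\<rceil> < n + v - 1/2 + 1" by linarith+
  ultimately show ?thesis unfolding F_def C_def by (intro sq_le) (use uv in linarith)+
qed
lemma CC_lt: "n \<in> {1/2 - v<..<1/2 - u} \<Longrightarrow> C u n < C v n"
proof -
  assume "n \<in> {1/2 - v<..<1/2 - u}"
  hence n: "1/2 - v < n" "n < 1/2 - u" by auto
  have e1: "\<lceil>n + u - 1/2\<rceil> = 0"
    using n uv by (simp add: ceiling_eq_iff; linarith)
  have e2: "\<lceil>n + v - 1/2\<rceil> = 1"
    using n uv by (simp add: ceiling_eq_iff; linarith)
  show ?thesis unfolding F_def C_def e1 e2 by (intro sq_lt) (use n uv in auto)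
qed


end

lemma delta1_rep: "delta1 \<sigma> t = (if t \<ge> 0 then integral\<^sup>L (gauss \<sigma>) (F \<bar>t\<bar>) else integral\<^sup>L (gauss \<sigma>) (C \<bar>t\<bar>))"
proof (cases "t \<ge> 0")
  case True thus ?thesis by (simp add: delta1_F)
next
  case False
  hence "- \<bar>t\<bar> = t" by simp
  thus ?thesis using False delta1_C[of \<sigma> "\<bar>t\<bar>"] by simp
qed

lemma delta1_strict:
  assumes s: "\<sigma> > 0" and t: "\<bar>t\<bar> < 1/2" and t': "\<bar>t'\<bar> < \<bar>t\<bar>"
  shows "delta1 \<sigma> t' < delta1 \<sigma> t"
proof -
  define u where "u = \<bar>t'\<bar>"
  define v where "v = \<bar>t\<bar>"
  have uv: "0 \<le> u" "u < v" "v < 1/2" using t t' unfolding u_def v_def by auto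
  have ab: "1/2 - v < 1/2 - u" using uv by simp
  have iu: "\<bar>u\<bar> < 1/2" "\<bar>v\<bar> < 1/2" using uv by auto
  note ints = F_int[OF s iu(1)] C_int[OF s iu(1)] F_int[OF s iu(2)] C_int[OF s iu(2)]
  show ?thesis
    unfolding delta1_rep[of \<sigma> t] delta1_rep[of \<sigma> t'] u_def[symmetric] v_def[symmetric]
    using strict_int[OF s _ _ FF_le[OF uv] FF_lt[OF uv] ab]
      strict_int[OF s _ _ FC_le[OF uv] FC_lt[OF uv] ab]
      strict_int[OF s _ _ CF_le[OF uv] CF_lt[OF uv] ab]
      strict_int[OF s _ _ CC_le[OF uv] CC_lt[OF uv] ab] ints
    by auto
qed

lemma mod1_meas[measurable]: "mod1 \<in> borel_measurable borel"
  unfolding mod1_def by measurable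

lemma deltaD_sum:
  assumes s: "\<sigma> > 0" and xb: "\<And>d. d < D \<Longrightarrow> \<bar>x d\<bar> < 1/2"
  shows "deltaD \<sigma> D x = (\<Sum>d<D. delta1 \<sigma> (x d))"
proof -
  let ?M = "PiM {..<D} (\<lambda>_. gauss \<sigma>)"
  have P: "\<And>i. i \<in> {..<D} \<Longrightarrow> prob_space (gauss \<sigma>)" using gauss_prob[OF s] .
  have key: "integrable ?M (\<lambda>n. (mod1 (x d + n d) - x d)\<^sup>2) \<and>
      (\<integral>n. (mod1 (x d + n d) - x d)\<^sup>2 \<partial>?M) = delta1 \<sigma> (x d)" if d: "d < D" for d
  proof -
    let ?G = "\<lambda>m. (mod1 (x d + m) - x d)\<^sup>2"
    have dist: "distr ?M (gauss \<sigma>) (\<lambda>\<omega>. \<omega> d) = gauss \<sigma>"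
      using distr_PiM_component[of "{..<D}" "\<lambda>_. gauss \<sigma>" d] P d by simp
    have meas: "(\<lambda>\<omega>. \<omega> d) \<in> measurable ?M (gauss \<sigma>)" using d by simp
    have Gm: "?G \<in> borel_measurable (gauss \<sigma>)" by simp
    have bnd: "norm (?G m) \<le> 1" for m
    proof -
      have "mod1 (x d + m) < 1/2" "mod1 (x d + m) \<ge> -1/2" unfolding mod1_def by linarith+
      hence "\<bar>mod1 (x d + m) - x d\<bar> \<le> 1" using xb[OF d] by linarith
      thus ?thesis by (simp add: abs_square_le_1)
    qed
    interpret prob_space "gauss \<sigma>" using gauss_prob[OF s] .
    have Gi: "integrable (gauss \<sigma>) ?G"
      by (rule integrable_const_bound[where B=1]) (auto intro!: AE_I2 simp: bnd[simplified])
    have "integrable ?M (\<lambda>n. ?G (n d))"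
      using Gi integrable_distr_eq[OF meas Gm] dist by simp
    moreover have "(\<integral>n. ?G (n d) \<partial>?M) = delta1 \<sigma> (x d)"
      using integral_distr[OF meas Gm] dist unfolding delta1_def by simp
    ultimately show ?thesis by simp
  qed
  show ?thesis unfolding deltaD_def
    by (subst Bochner_Integration.integral_sum) (use key in auto)
qed

lemma CF_le_eq:
  assumes "0 \<le> a" "a < 1/2"
  shows "C a n \<le> F a n"
proof -
  have "of_int \<lceil>n + a - 1/2\<rceil> \<ge> n + a - 1/2" "of_int \<lceil>n + a - 1/2\<rceil> < n + a - 1/2 + 1" by linarith+
  moreover have "of_int \<lfloor>n + a + 1/2\<rfloor> \<le> n + a + 1/2" "n + a + 1/2 < of_int \<lfloor>n + a + 1/2\<rfloor> + 1" by linarith+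
  ultimately show ?thesis unfolding F_def C_def by (intro sq_le) (use assms in linarith)+
qed

lemma delta1_neg_le:
  assumes s: "\<sigma> > 0" and "0 \<le> a" "a < 1/2"
  shows "delta1 \<sigma> (-a) \<le> delta1 \<sigma> a"
proof -
  have ia: "\<bar>a\<bar> < 1/2" using assms by auto
  show ?thesis unfolding delta1_C[of \<sigma> a] delta1_F[of \<sigma> a]
    by (rule integral_mono[OF C_int[OF s ia] F_int[OF s ia]]) (rule CF_le_eq[OF assms(2,3)])
qed

theorem theorem3:
  fixes D :: nat and a N\<^sub>0 P :: real
  assumes "D \<ge> 1" and "0 < a" and "a < 1/2" and "N\<^sub>0 > 0" and "P > 0"
  shows "(\<forall>s :: nat \<Rightarrow> real. (\<forall>d<D. s d \<in> {-a..a}) \<longrightarrow>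
            real D * delta1 (sqrt (N\<^sub>0 / P)) 0 \<le> deltaD (sqrt (N\<^sub>0 / P)) D s \<and>
            deltaD (sqrt (N\<^sub>0 / P)) D s \<le> real D * delta1 (sqrt (N\<^sub>0 / P)) a)
       \<and> (\<forall>t t' :: real. t \<in> {-a..a} \<longrightarrow> t' \<in> {-a..a} \<longrightarrow> \<bar>t'\<bar> < \<bar>t\<bar> \<longrightarrow>
            delta1 (sqrt (N\<^sub>0 / P)) t' < delta1 (sqrt (N\<^sub>0 / P)) t)"
proof -
  define \<sigma> where "\<sigma> = sqrt (N\<^sub>0 / P)"
  have s: "\<sigma> > 0" unfolding \<sigma>_def using assms by simp
  have part2: "delta1 \<sigma> t' < delta1 \<sigma> t" if "t \<in> {-a..a}" "\<bar>t'\<bar> < \<bar>t\<bar>" for t t'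
    by (rule delta1_strict[OF s _ that(2)]) (use that assms in auto)
  have lo: "delta1 \<sigma> 0 \<le> delta1 \<sigma> x" if "x \<in> {-a..a}" for x
  proof (cases "x = 0")
    case False thus ?thesis using part2[OF that, of 0] by simp
  qed simp
  have hi: "delta1 \<sigma> x \<le> delta1 \<sigma> a" if xi: "x \<in> {-a..a}" for x
  proof -
    consider "\<bar>x\<bar> < a" | "x = a" | "x = -a" using xi by force
    thus ?thesis
    proof cases
      case 1 thus ?thesis using part2[of a x] assms by auto
    next
      case 3 thus ?thesis using delta1_neg_le[OF s, of a] assms by simp
    qed simp
  qed
  have main: "real D * delta1 \<sigma> 0 \<le> deltaD \<sigma> D x \<and> deltaD \<sigma> D x \<le> real D * delta1 \<sigma> a"
    if x: "\<forall>d<D. x d \<in> {-a..a}" for x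
  proof -
    have eq: "deltaD \<sigma> D x = (\<Sum>d<D. delta1 \<sigma> (x d))"
      by (rule deltaD_sum[OF s]) (use x assms in force)
    have "real D * delta1 \<sigma> 0 = (\<Sum>d<D. delta1 \<sigma> 0)" by simp
    also have "\<dots> \<le> (\<Sum>d<D. delta1 \<sigma> (x d))" by (rule sum_mono) (use lo x in auto)
    finally have 1: "real D * delta1 \<sigma> 0 \<le> deltaD \<sigma> D x" using eq by simp
    have "(\<Sum>d<D. delta1 \<sigma> (x d)) \<le> (\<Sum>d<D. delta1 \<sigma> a)" by (rule sum_mono) (use hi x in auto)
    also have "\<dots> = real D * delta1 \<sigma> a" by simp
    finally show ?thesis using 1 eq by simp
  qed
  show ?thesis unfolding \<sigma>_def[symmetric] using main part2 by blast
qed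

end
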